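(* Let $\mathscr{R}_1, \mathscr{R}_2$ be von Neumann algebras acting on a Hilbert space $\mathscr{H}$, and let $A$ be an operator in $\mathscr{R}_1\cap\mathscr{R}_2$. Then $\mathscr{R}_1A\cap\mathscr{R}_2 = \mathscr{R}_1A\cap\mathscr{R}_2A = (\mathscr{R}_1\cap\mathscr{R}_2)A$.
   Context: For a set $\mathscr{M}$ of operators and an operator $A$, $\mathscr{M}A = \{MA : M\in\mathscr{M}\}$. *)

theory Defs
  imports "HOL-Analysis.Analysis"
begin

text \<open>Complex vector spaces, complex inner product spaces and complex Hilbert spaces
  (HOL-Analysis only provides real inner product spaces).\<close>

class complex_vector = real_vector +
  fixes scaleC :: "complex \<Rightarrow> 'a \<Rightarrow> 'a" (infixr \<open>*\<^sub>C\<close> 75)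
  assumes scaleC_add_right: "a *\<^sub>C (x + y) = a *\<^sub>C x + a *\<^sub>C y"
    and scaleC_add_left: "(a + b) *\<^sub>C x = a *\<^sub>C x + b *\<^sub>C x"
    and scaleC_scaleC: "a *\<^sub>C (b *\<^sub>C x) = (a * b) *\<^sub>C x"
    and scaleC_one: "1 *\<^sub>C x = x"
    and scaleR_scaleC: "scaleR r x = complex_of_real r *\<^sub>C x"

class complex_inner = complex_vector + real_normed_vector +
  fixes cinner :: "'a \<Rightarrow> 'a \<Rightarrow> complex"
  assumes cinner_commute: "cinner x y = cnj (cinner y x)"
    and cinner_add_left: "cinner (x + y) z = cinner x z + cinner y z"
    and cinner_scaleC_left: "cinner (r *\<^sub>C x) y = cnj r * cinner x y"
    and cinner_nonneg: "0 \<le> Re (cinner x x)"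
    and cinner_eq_zero_iff: "cinner x x = 0 \<longleftrightarrow> x = 0"
    and norm_eq_sqrt_cinner: "norm x = sqrt (Re (cinner x x))"

class chilbert_space = complex_inner + complete_space

definition bounded_clinear :: "('a::complex_inner \<Rightarrow> 'b::complex_inner) \<Rightarrow> bool" where
  "bounded_clinear f \<longleftrightarrow>
     (\<forall>x y. f (x + y) = f x + f y) \<and> (\<forall>c x. f (c *\<^sub>C x) = c *\<^sub>C f x) \<and>
     (\<exists>K. \<forall>x. norm (f x) \<le> norm x * K)"

definition is_adjoint :: "('a::complex_inner \<Rightarrow> 'a) \<Rightarrow> ('a \<Rightarrow> 'a) \<Rightarrow> bool" where
  "is_adjoint T S \<longleftrightarrow> (\<forall>x y. cinner (T x) y = cinner x (S y))"

text \<open>Closedness in the weak-operator topology (via its basic neighbourhoods).\<close>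

definition wot_closed :: "('a::complex_inner \<Rightarrow> 'a) set \<Rightarrow> bool" where
  "wot_closed M \<longleftrightarrow>
     (\<forall>T. bounded_clinear T \<and>
          (\<forall>e>0. \<forall>F::('a \<times> 'a) set. finite F \<longrightarrow>
              (\<exists>S\<in>M. \<forall>(x, y)\<in>F. cmod (cinner (T x - S x) y) < e))
        \<longrightarrow> T \<in> M)"

definition von_neumann_algebra :: "('a::chilbert_space \<Rightarrow> 'a) set \<Rightarrow> bool" where
  "von_neumann_algebra R \<longleftrightarrow>
     (\<forall>T\<in>R. bounded_clinear T) \<and> id \<in> R \<and>
     (\<forall>S\<in>R. \<forall>T\<in>R. (\<lambda>x. S x + T x) \<in> R \<and> S \<circ> T \<in> R) \<and>
     (\<forall>c. \<forall>T\<in>R. (\<lambda>x. c *\<^sub>C T x) \<in> R) \<and>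
     (\<forall>T\<in>R. \<exists>S\<in>R. is_adjoint T S) \<and>
     wot_closed R"

definition op_rmult :: "('a \<Rightarrow> 'a) set \<Rightarrow> ('a \<Rightarrow> 'a) \<Rightarrow> ('a \<Rightarrow> 'a) set" where
  "op_rmult M A = (\<lambda>T. T \<circ> A) ` M"

end

theory Submission
  imports Defs
begin


lemma scaleC_real: "complex_of_real r *\<^sub>C (x::'a::complex_vector) = r *\<^sub>R x"
  by (simp add: scaleR_scaleC)

lemma cinner_zero_left[simp]: "cinner 0 (y::'a::complex_inner) = 0"
  using cinner_add_left[of 0 0 y] by simp

lemma cinner_minus_left: "cinner (- x) (y::'a::complex_inner) = - cinner x y"
  using cinner_add_left[of x "-x" y] by (simp add: add_eq_0_iff2)

lemma cinner_diff_left: "cinner (x - y) z = cinner x z - cinner (y::'a::complex_inner) z"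
  using cinner_add_left[of x "-y" z] cinner_minus_left[of y z] by simp

lemma cinner_add_right: "cinner x (y + z) = cinner x y + cinner (x::'a::complex_inner) z"
  by (metis cinner_commute cinner_add_left complex_cnj_add)

lemma cinner_zero_right[simp]: "cinner (x::'a::complex_inner) 0 = 0"
  by (metis cinner_commute cinner_zero_left complex_cnj_zero)

lemma cinner_diff_right: "cinner x (y - z) = cinner x y - cinner (x::'a::complex_inner) z"
  by (metis cinner_commute cinner_diff_left complex_cnj_diff)

lemma cinner_scaleC_right: "cinner x (c *\<^sub>C y) = c * cinner (x::'a::complex_inner) y"
  by (metis cinner_commute cinner_scaleC_left complex_cnj_cnj complex_cnj_mult)

lemma cinner_scaleR_left: "cinner (r *\<^sub>R x) y = complex_of_real r * cinner (x::'a::complex_inner) y"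
  by (simp add: scaleR_scaleC cinner_scaleC_left)

lemma cinner_scaleR_right: "cinner x (r *\<^sub>R y) = complex_of_real r * cinner (x::'a::complex_inner) y"
  by (simp add: scaleR_scaleC cinner_scaleC_right)

lemma cinner_self: "cinner x x = complex_of_real ((norm (x::'a::complex_inner))^2)"
proof (rule complex_eqI)
  have "Im (cinner x x) = Im (cnj (cinner x x))" using cinner_commute[of x x] by simp
  then show "Im (cinner x x) = Im (complex_of_real ((norm x)^2))" by simp
  show "Re (cinner x x) = Re (complex_of_real ((norm x)^2))"
    using norm_eq_sqrt_cinner[of x] cinner_nonneg[of x] by simp
qed

lemma Re_cinner_commute: "Re (cinner y x) = Re (cinner x (y::'a::complex_inner))"
  by (metis cinner_commute complex_cnj_cancel_iff complex_cnj_cnj cnj.simps(1))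

lemma cmod_cinner_commute: "cmod (cinner y x) = cmod (cinner x (y::'a::complex_inner))"
  by (metis cinner_commute complex_mod_cnj)

lemma Re_cinner_self: "Re (cinner x x) = (norm (x::'a::complex_inner))^2"
  by (simp add: cinner_self del: of_real_power)

lemma norm_diff_sq: "(norm (x - y))^2 = (norm x)^2 - 2 * Re (cinner x y) + (norm (y::'a::complex_inner))^2"
proof -
  have "cinner (x - y) (x - y) = cinner x x - cinner x y - cinner y x + cinner y y"
    by (simp add: cinner_diff_left cinner_diff_right)
  then have "Re (cinner (x - y) (x - y)) = Re (cinner x x - cinner x y - cinner y x + cinner y y)"
    by simp
  then show ?thesis by (simp add: Re_cinner_self Re_cinner_commute[of y x])
qed

lemma cauchy_schwarz: "cmod (cinner x y) \<le> norm x * norm (y::'a::complex_inner)"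
proof (cases "y = 0")
  case True then show ?thesis by simp
next
  case False
  define n where "n = (norm y)^2"
  have n: "n > 0" using False by (simp add: n_def)
  define a where "a = cinner y x"
  define t where "t = a / complex_of_real n"
  have "cinner (x - t *\<^sub>C y) (x - t *\<^sub>C y) =
      cinner x x - t * cinner x y - cnj t * a + cnj t * t * cinner y y"
    by (simp add: cinner_diff_left cinner_diff_right
        cinner_scaleC_left cinner_scaleC_right a_def algebra_simps)
  also have "cinner x y = cnj a" using cinner_commute a_def by simp
  also have "cinner x x - t * cnj a - cnj t * a + cnj t * t * cinner y y
       = complex_of_real ((norm x)^2 - (cmod a)^2 / n)"
    using n unfolding t_def
    by (simp add: cinner_self n_def[symmetric] complex_norm_square field_simps del: of_real_power)
  finally have "Re (cinner (x - t *\<^sub>C y) (x - t *\<^sub>C y)) = (norm x)^2 - (cmod a)^2 / n"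
    by simp
  then have "0 \<le> (norm x)^2 - (cmod a)^2 / n" by (metis Re_cinner_self zero_le_power2)
  then have "(cmod a)^2 \<le> (norm x)^2 * (norm y)^2" using n
    by (simp add: n_def field_simps)
  then have "(cmod a)^2 \<le> (norm x * norm y)^2" by (simp add: power_mult_distrib)
  then have "cmod a \<le> norm x * norm y"
    by (rule power2_le_imp_le) simp
  then show ?thesis unfolding a_def by (simp add: cmod_cinner_commute)
qed




lemma bclin_linear:
  assumes "bounded_clinear (T::'a::complex_inner \<Rightarrow> 'b::complex_inner)"
  shows "bounded_linear T"
proof -
  obtain K where K: "\<forall>x. norm (T x) \<le> norm x * K"
    and add: "\<forall>x y. T (x + y) = T x + T y" and sc: "\<forall>c x. T (c *\<^sub>C x) = c *\<^sub>C T x"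
    using assms unfolding bounded_clinear_def by blast
  show ?thesis
  proof (rule bounded_linear_intro[where K=K])
    show "T (x + y) = T x + T y" for x y using add by blast
    show "T (r *\<^sub>R x) = r *\<^sub>R T x" for r x using sc by (simp add: scaleR_scaleC)
    show "norm (T x) \<le> norm x * K" for x using K by blast
  qed
qed

lemma norm_scaleC: "norm (c *\<^sub>C x) = cmod c * norm (x::'a::complex_inner)"
proof -
  have "cinner (c *\<^sub>C x) (c *\<^sub>C x) = (cnj c * c) * cinner x x"
    by (simp add: cinner_scaleC_left cinner_scaleC_right)
  also have "cnj c * c = complex_of_real ((cmod c)^2)"
    by (simp add: complex_norm_square mult.commute del: of_real_power)
  also have "cinner x x = complex_of_real ((norm x)^2)" by (rule cinner_self)
  finally have "Re (cinner (c *\<^sub>C x) (c *\<^sub>C x)) = (cmod c)^2 * (norm x)^2"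
    by (simp del: of_real_power)
  then have "(norm (c *\<^sub>C x))^2 = (cmod c * norm x)^2"
    by (simp add: Re_cinner_self power_mult_distrib)
  then show ?thesis by (simp add: power2_eq_iff_nonneg)
qed

lemma bounded_linear_scaleC: "bounded_linear (\<lambda>u::'a::complex_inner. c *\<^sub>C u)"
  by (rule bounded_linear_intro[where K="cmod c"])
     (auto simp: scaleC_add_right scaleR_scaleC scaleC_scaleC norm_scaleC mult.commute)

lemma bclin_compose:
  assumes "bounded_clinear S" "bounded_clinear T"
  shows "bounded_clinear (S \<circ> (T::'a::complex_inner \<Rightarrow> 'a))"
proof -
  obtain K1 where K1: "\<forall>x. norm (S x) \<le> norm x * K1" "\<forall>x y. S (x + y) = S x + S y" "\<forall>c x. S (c *\<^sub>C x) = c *\<^sub>C S x"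
    using assms unfolding bounded_clinear_def by blast
  obtain K2 where K2: "\<forall>x. norm (T x) \<le> norm x * K2" "\<forall>x y. T (x + y) = T x + T y" "\<forall>c x. T (c *\<^sub>C x) = c *\<^sub>C T x"
    using assms unfolding bounded_clinear_def by blast
  have "bounded_linear (S \<circ> T)"
    using bounded_linear_compose[OF bclin_linear[OF assms(1)] bclin_linear[OF assms(2)]]
    by (simp add: comp_def)
  then obtain K where "\<forall>x. norm ((S \<circ> T) x) \<le> norm x * K"
    using bounded_linear.bounded by blast
  then show ?thesis unfolding bounded_clinear_def using K1 K2 by auto
qed

lemma vn_bclin: "von_neumann_algebra R \<Longrightarrow> T \<in> R \<Longrightarrow> bounded_clinear T"
  unfolding von_neumann_algebra_def by blast
lemma vn_id: "von_neumann_algebra R \<Longrightarrow> (\<lambda>x. x) \<in> R"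
  unfolding von_neumann_algebra_def id_def by blast
lemma vn_add: "von_neumann_algebra R \<Longrightarrow> S \<in> R \<Longrightarrow> T \<in> R \<Longrightarrow> (\<lambda>x. S x + T x) \<in> R"
  unfolding von_neumann_algebra_def by blast
lemma vn_comp: "von_neumann_algebra R \<Longrightarrow> S \<in> R \<Longrightarrow> T \<in> R \<Longrightarrow> S \<circ> T \<in> R"
  unfolding von_neumann_algebra_def by blast
lemma vn_scaleR: "von_neumann_algebra R \<Longrightarrow> T \<in> R \<Longrightarrow> (\<lambda>x. r *\<^sub>R T x) \<in> R"
proof -
  assume "von_neumann_algebra R" "T \<in> R"
  then have "(\<lambda>x. complex_of_real r *\<^sub>C T x) \<in> R" unfolding von_neumann_algebra_def by blast
  then show ?thesis by (simp only: scaleC_real)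
qed
lemma vn_diff: "von_neumann_algebra R \<Longrightarrow> S \<in> R \<Longrightarrow> T \<in> R \<Longrightarrow> (\<lambda>x. S x - T x) \<in> R"
  using vn_add[of R S "\<lambda>x. (-1) *\<^sub>R T x"] vn_scaleR[of R T "-1"] by simp
lemma vn_zero: "von_neumann_algebra R \<Longrightarrow> (\<lambda>x. 0) \<in> R"
  using vn_scaleR[of R "\<lambda>x. x" 0] vn_id[of R] by simp
lemma vn_funpow: "von_neumann_algebra R \<Longrightarrow> T \<in> R \<Longrightarrow> (T ^^ n) \<in> R"
  by (induction n) (auto simp: vn_comp vn_id[of R, unfolded id_def[symmetric]])
lemma vn_sum: "von_neumann_algebra R \<Longrightarrow> (\<And>j. F j \<in> R) \<Longrightarrow> (\<lambda>x. \<Sum>j<(m::nat). F j x) \<in> R"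
  by (induction m) (auto simp: vn_zero vn_add)

lemma bclin_limit:
  fixes Fs :: "nat \<Rightarrow> 'a::complex_inner \<Rightarrow> 'a"
  assumes bc: "\<And>n. bounded_clinear (Fs n)" and bd: "\<And>n x. norm (Fs n x) \<le> norm x * K"
    and lim: "\<And>x. (\<lambda>n. Fs n x) \<longlonglongrightarrow> G x"
  shows "bounded_clinear G"
  unfolding bounded_clinear_def
proof (intro conjI allI exI)
  fix x y
  have "(\<lambda>n. Fs n (x + y)) \<longlonglongrightarrow> G x + G y"
    using tendsto_add[OF lim[of x] lim[of y]] bc unfolding bounded_clinear_def by simp
  then show "G (x + y) = G x + G y" using lim[of "x+y"] LIMSEQ_unique by blast
next
  fix c x
  have "(\<lambda>n. c *\<^sub>C Fs n x) \<longlonglongrightarrow> c *\<^sub>C G x"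
    using bounded_linear.tendsto[OF bounded_linear_scaleC lim[of x]] .
  then have "(\<lambda>n. Fs n (c *\<^sub>C x)) \<longlonglongrightarrow> c *\<^sub>C G x"
    using bc unfolding bounded_clinear_def by simp
  then show "G (c *\<^sub>C x) = c *\<^sub>C G x" using lim[of "c *\<^sub>C x"] LIMSEQ_unique by blast
next
  fix x
  show "norm (G x) \<le> norm x * K"
    using tendsto_norm[OF lim[of x]] bd
    by (meson LIMSEQ_le_const2)
qed

lemma wot_limit:
  fixes Fs :: "nat \<Rightarrow> 'a::complex_inner \<Rightarrow> 'a"
  assumes wot: "wot_closed R" and inR: "\<And>n. Fs n \<in> R"
    and lim: "\<And>x. (\<lambda>n. Fs n x) \<longlonglongrightarrow> G x" and bc: "bounded_clinear G"
  shows "G \<in> R"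
proof -
  have approx: "\<exists>S\<in>R. \<forall>(x, y)\<in>F. cmod (cinner (G x - S x) y) < e"
    if e: "e > 0" and fin: "finite F" for e and F :: "('a \<times> 'a) set"
  proof -
    have ev: "eventually (\<lambda>n. cmod (cinner (G x - Fs n x) y) < e) sequentially" for x y
    proof -
      have "(\<lambda>n. G x - Fs n x) \<longlonglongrightarrow> 0"
        using tendsto_diff[OF tendsto_const lim[of x], of "G x"] by simp
      then have "(\<lambda>n. norm (G x - Fs n x) * norm y) \<longlonglongrightarrow> 0"
        using tendsto_mult[OF tendsto_norm[of "\<lambda>n. G x - Fs n x" 0] tendsto_const[of "norm y"]]
        by simp
      then have "(\<lambda>n. cmod (cinner (G x - Fs n x) y)) \<longlonglongrightarrow> 0"
        by (rule tendsto_sandwich[rotated 2, OF tendsto_const])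
           (auto simp: cauchy_schwarz)
      then show ?thesis using e by (simp add: order_tendstoD(2))
    qed
    have "eventually (\<lambda>n. \<forall>(x, y)\<in>F. cmod (cinner (G x - Fs n x) y) < e) sequentially"
      using eventually_ball_finite[OF fin, of "\<lambda>n p. cmod (cinner (G (fst p) - Fs n (fst p)) (snd p)) < e"] ev
      by (simp add: case_prod_beta)
    then obtain n where "\<forall>(x, y)\<in>F. cmod (cinner (G x - Fs n x) y) < e"
      by (auto simp: eventually_sequentially)
    then show ?thesis using inR by blast
  qed
  show ?thesis
    apply (rule wot[unfolded wot_closed_def, rule_format, of G])
    apply (intro conjI allI impI)
      apply (rule bc)
     apply (rule approx)
      apply assumption+
    done
qed




definition Dop :: "('a::complex_inner \<Rightarrow> 'a) \<Rightarrow> ('a \<Rightarrow> 'a) \<Rightarrow> real \<Rightarrow> 'a \<Rightarrow> 'a" where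
  "Dop A B r = (\<lambda>x. x - r *\<^sub>R A (B x))"

context
  fixes A B :: "'a::chilbert_space \<Rightarrow> 'a" and r :: real
  assumes Abc: "bounded_clinear A" and Bbc: "bounded_clinear B"
    and adj: "\<And>x y. cinner (A x) y = cinner x (B y)"
    and rpos: "r > 0" and rbd: "\<And>x. r * (norm (A x))^2 \<le> (norm x)^2"
begin

lemma Alin: "bounded_linear A" using bclin_linear[OF Abc] .
lemma Blin: "bounded_linear B" using bclin_linear[OF Bbc] .

lemma adj': "cinner x (A (B y)) = cinner (B x) (B y)"
proof -
  have "cinner x (A (B y)) = cnj (cinner (A (B y)) x)" by (rule cinner_commute)
  also have "\<dots> = cnj (cinner (B y) (B x))" by (simp add: adj)
  also have "\<dots> = cinner (B x) (B y)" using cinner_commute[of "B x" "B y"] by simp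
  finally show ?thesis .
qed

lemma D_adj: "cinner (Dop A B r x) y = cinner x (Dop A B r y)"
  unfolding Dop_def
  by (simp add: cinner_diff_left cinner_diff_right cinner_scaleR_left cinner_scaleR_right adj adj')

lemma D_norm: "(norm (Dop A B r z))^2 \<le> (norm z)^2 - r * (norm (B z))^2"
proof -
  have e: "(norm (Dop A B r z))^2 = (norm z)^2 - 2 * Re (cinner z (r *\<^sub>R A (B z))) + (norm (r *\<^sub>R A (B z)))^2"
    unfolding Dop_def by (rule norm_diff_sq)
  have "Re (cinner z (r *\<^sub>R A (B z))) = r * (norm (B z))^2"
    by (simp add: cinner_scaleR_right adj' Re_cinner_self)
  moreover have "(norm (r *\<^sub>R A (B z)))^2 = r * (r * (norm (A (B z)))^2)"
    using rpos by (simp add: power_mult_distrib power2_eq_square)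
  moreover have "r * (r * (norm (A (B z)))^2) \<le> r * (norm (B z))^2"
    using rbd[of "B z"] rpos by simp
  ultimately show ?thesis using e by linarith
qed

lemma D_norm_le: "norm (Dop A B r z) \<le> norm z"
proof -
  have "(norm (Dop A B r z))^2 \<le> (norm z)^2"
  proof -
    have "0 \<le> r * (norm (B z))^2" using rpos by simp
    then show ?thesis using D_norm[of z] by linarith
  qed
  then show ?thesis by (rule power2_le_imp_le) simp
qed

lemma Dn_adj: "cinner ((Dop A B r ^^ n) x) y = cinner x ((Dop A B r ^^ n) y)"
proof (induction n arbitrary: x y)
  case 0 then show ?case by simp
next
  case (Suc n)
  have "cinner ((Dop A B r ^^ Suc n) x) y = cinner ((Dop A B r ^^ n) x) (Dop A B r y)"
    by (simp add: D_adj)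
  also have "\<dots> = cinner x ((Dop A B r ^^ n) (Dop A B r y))" by (rule Suc.IH)
  also have "\<dots> = cinner x ((Dop A B r ^^ Suc n) y)" by (simp add: funpow_Suc_right del: funpow.simps)
  finally show ?case .
qed

lemma Dn_inner: "cinner ((Dop A B r ^^ a) x) ((Dop A B r ^^ b) y) = cinner x ((Dop A B r ^^ (a + b)) y)"
  by (simp add: Dn_adj funpow_add)

lemma Dn_norm_Suc: "norm ((Dop A B r ^^ Suc n) x) \<le> norm ((Dop A B r ^^ n) x)"
  by (simp add: D_norm_le)

lemma Dn_norm_le: "norm ((Dop A B r ^^ n) x) \<le> norm x"
  by (induction n) (auto intro: order_trans[OF D_norm_le])

lemma Dn_sum: "(\<Sum>k<N. r * (norm (B ((Dop A B r ^^ k) x)))^2) \<le> (norm x)^2 - (norm ((Dop A B r ^^ N) x))^2"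
proof (induction N)
  case 0 then show ?case by simp
next
  case (Suc N)
  have "(norm ((Dop A B r ^^ Suc N) x))^2 \<le> (norm ((Dop A B r ^^ N) x))^2 - r * (norm (B ((Dop A B r ^^ N) x)))^2"
    using D_norm[of "(Dop A B r ^^ N) x"] by simp
  then show ?case using Suc.IH by simp
qed

lemma B_Dn_zero: "(\<lambda>k. norm (B ((Dop A B r ^^ k) x))) \<longlonglongrightarrow> 0"
proof -
  have pos: "0 \<le> r * (norm (B ((Dop A B r ^^ n) x)))^2" for n using rpos by simp
  have le: "(\<Sum>k<n. r * (norm (B ((Dop A B r ^^ k) x)))^2) \<le> (norm x)^2" for n
  proof -
    have "0 \<le> (norm ((Dop A B r ^^ n) x))^2" by simp
    then show ?thesis using Dn_sum[where N=n and x=x] by linarith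
  qed
  have "summable (\<lambda>k. r * (norm (B ((Dop A B r ^^ k) x)))^2)"
    by (rule summableI_nonneg_bounded[OF pos le])
  then have "(\<lambda>k. r * (norm (B ((Dop A B r ^^ k) x)))^2) \<longlonglongrightarrow> 0"
    by (rule summable_LIMSEQ_zero)
  then have "(\<lambda>k. (1/r) * (r * (norm (B ((Dop A B r ^^ k) x)))^2)) \<longlonglongrightarrow> (1/r) * 0"
    by (rule tendsto_mult[OF tendsto_const])
  then have "(\<lambda>k. (norm (B ((Dop A B r ^^ k) x)))^2) \<longlonglongrightarrow> 0"
    using rpos by simp
  then have "(\<lambda>k. sqrt ((norm (B ((Dop A B r ^^ k) x)))^2)) \<longlonglongrightarrow> sqrt 0"
    by (rule tendsto_real_sqrt)
  then show ?thesis by simp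
qed

lemma DnA_zero: "(\<lambda>n. (Dop A B r ^^ n) (A y)) \<longlonglongrightarrow> 0"
proof -
  define h where "h n = norm y * norm (B ((Dop A B r ^^ (2 * n)) (A y)))" for n
  have "((\<lambda>n. norm (B ((Dop A B r ^^ n) (A y)))) \<circ> (\<lambda>n. 2 * n)) \<longlonglongrightarrow> 0"
    by (rule LIMSEQ_subseq_LIMSEQ[OF B_Dn_zero]) (simp add: strict_mono_def)
  then have "(\<lambda>n. norm y * norm (B ((Dop A B r ^^ (2 * n)) (A y)))) \<longlonglongrightarrow> norm y * 0"
    by (intro tendsto_mult tendsto_const) (simp add: comp_def)
  then have h0: "h \<longlonglongrightarrow> 0" unfolding h_def by simp
  have bd: "(norm ((Dop A B r ^^ n) (A y)))^2 \<le> h n" for n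
  proof -
    have "(norm ((Dop A B r ^^ n) (A y)))^2 = Re (cinner ((Dop A B r ^^ n) (A y)) ((Dop A B r ^^ n) (A y)))"
      by (simp add: Re_cinner_self)
    also have "\<dots> = Re (cinner y (B ((Dop A B r ^^ (2 * n)) (A y))))"
      by (simp add: Dn_inner adj mult_2)
    also have "\<dots> \<le> cmod (cinner y (B ((Dop A B r ^^ (2 * n)) (A y))))"
      by (rule complex_Re_le_cmod)
    also have "\<dots> \<le> h n" unfolding h_def by (rule cauchy_schwarz)
    finally show ?thesis .
  qed
  have "(\<lambda>n. sqrt (h n)) \<longlonglongrightarrow> sqrt 0" using h0 by (rule tendsto_real_sqrt)
  then have s0: "(\<lambda>n. sqrt (h n)) \<longlonglongrightarrow> 0" by simp
  have "(\<lambda>n. norm ((Dop A B r ^^ n) (A y))) \<longlonglongrightarrow> 0"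
  proof (rule tendsto_sandwich[OF _ _ tendsto_const s0])
    show "\<forall>\<^sub>F n in sequentially. 0 \<le> norm ((Dop A B r ^^ n) (A y))" by simp
    show "\<forall>\<^sub>F n in sequentially. norm ((Dop A B r ^^ n) (A y)) \<le> sqrt (h n)"
      using bd by (simp add: real_le_rsqrt)
  qed
  then show ?thesis by (rule tendsto_norm_zero_cancel)
qed

lemma Dn_conv: "convergent (\<lambda>n. (Dop A B r ^^ (2 * n)) x)"
proof -
  define a where "a n = (norm ((Dop A B r ^^ n) x))^2" for n
  have "decseq a" unfolding a_def decseq_Suc_iff
    by (intro allI power_mono Dn_norm_Suc) simp
  moreover have "\<forall>i. 0 \<le> a i" by (simp add: a_def)
  ultimately obtain l where l: "a \<longlonglongrightarrow> l" using decseq_convergent[of a 0] by blast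
  have sq: "(norm ((Dop A B r ^^ (2 * m)) x - (Dop A B r ^^ (2 * n)) x))^2 = a (2 * m) - 2 * a (m + n) + a (2 * n)" for m n
  proof -
    have "cinner ((Dop A B r ^^ (2 * m)) x) ((Dop A B r ^^ (2 * n)) x)
        = cinner ((Dop A B r ^^ (m + n)) x) ((Dop A B r ^^ (m + n)) x)"
    proof -
      have e: "2 * m + 2 * n = (m + n) + (m + n)" by simp
      show ?thesis using Dn_inner[of "2*m" x "2*n" x] Dn_inner[of "m+n" x "m+n" x] unfolding e by simp
    qed
    then show ?thesis unfolding a_def by (simp add: norm_diff_sq Re_cinner_self)
  qed
  have "Cauchy (\<lambda>n. (Dop A B r ^^ (2 * n)) x)"
  proof (rule CauchyI)
    fix e :: real assume e: "e > 0"
    then have "e^2 / 4 > 0" by simp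
    then obtain M where M: "\<forall>k\<ge>M. dist (a k) l < e^2 / 4"
      using l unfolding lim_sequentially by blast
    have "\<forall>m\<ge>M. \<forall>n\<ge>M. norm ((Dop A B r ^^ (2 * m)) x - (Dop A B r ^^ (2 * n)) x) < e"
    proof (intro allI impI)
      fix m n assume mn: "m \<ge> M" "n \<ge> M"
      have "\<bar>a (2*m) - l\<bar> < e^2/4" "\<bar>a (2*n) - l\<bar> < e^2/4" "\<bar>a (m+n) - l\<bar> < e^2/4"
        using M mn by (auto simp: dist_real_def)
      then have "(norm ((Dop A B r ^^ (2 * m)) x - (Dop A B r ^^ (2 * n)) x))^2 < e^2"
        unfolding sq by linarith
      then show "norm ((Dop A B r ^^ (2 * m)) x - (Dop A B r ^^ (2 * n)) x) < e"
        using e by (simp add: power_less_imp_less_base less_imp_le)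
    qed
    then show "\<exists>M. \<forall>m\<ge>M. \<forall>n\<ge>M. norm ((Dop A B r ^^ (2 * m)) x - (Dop A B r ^^ (2 * n)) x) < e" by blast
  qed
  then show ?thesis by (simp add: Cauchy_convergent_iff)
qed

lemma Dn_ident: "x - (Dop A B r ^^ m) x = r *\<^sub>R A (B (\<Sum>j<m. (Dop A B r ^^ j) x))"
proof (induction m)
  case 0 then show ?case using linear_simps(3)[OF Alin] linear_simps(3)[OF Blin] by simp
next
  case (Suc m)
  have "x - (Dop A B r ^^ Suc m) x = (x - (Dop A B r ^^ m) x) + r *\<^sub>R A (B ((Dop A B r ^^ m) x))"
    by (simp add: Dop_def)
  also have "\<dots> = r *\<^sub>R A (B (\<Sum>j<Suc m. (Dop A B r ^^ j) x))"
    using Suc.IH by (simp add: linear_simps(1)[OF Alin] linear_simps(1)[OF Blin] scaleR_add_right)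
  finally show ?case .
qed

end



lemma vn_wot: "von_neumann_algebra R \<Longrightarrow> wot_closed R"
  unfolding von_neumann_algebra_def by blast

lemma vn_adj: "von_neumann_algebra R \<Longrightarrow> T \<in> R \<Longrightarrow> \<exists>S\<in>R. is_adjoint T S"
  unfolding von_neumann_algebra_def by blast

lemma adjoint_unique:
  assumes "is_adjoint A B1" "is_adjoint A (B2::'a::complex_inner \<Rightarrow> 'a)"
  shows "B1 = B2"
proof
  fix y
  have "cinner x (B1 y - B2 y) = 0" for x
    using assms unfolding is_adjoint_def by (simp add: cinner_diff_right)
  then have "cinner (B1 y - B2 y) (B1 y - B2 y) = 0" .
  then show "B1 y = B2 y" using cinner_eq_zero_iff[of "B1 y - B2 y"] by simp
qed

lemma key:
  fixes A T :: "'a::chilbert_space \<Rightarrow> 'a"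
  assumes vn1: "von_neumann_algebra R1" and vn2: "von_neumann_algebra R2"
    and A1: "A \<in> R1" and A2: "A \<in> R2" and T1: "T \<in> R1" and TA: "T \<circ> A \<in> R2"
  shows "\<exists>S\<in>R1 \<inter> R2. S \<circ> A = T \<circ> A"
proof -
  obtain B where B1: "B \<in> R1" and adjB: "is_adjoint A B" using vn_adj[OF vn1 A1] by blast
  obtain B' where B2': "B' \<in> R2" and adjB': "is_adjoint A B'" using vn_adj[OF vn2 A2] by blast
  have B2: "B \<in> R2" using adjoint_unique[OF adjB adjB'] B2' by simp
  have adj: "\<And>x y. cinner (A x) y = cinner x (B y)" using adjB unfolding is_adjoint_def by blast
  have Abc: "bounded_clinear A" using vn_bclin[OF vn1 A1] .
  have Bbc: "bounded_clinear B" using vn_bclin[OF vn1 B1] .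
  have Tbc: "bounded_clinear T" using vn_bclin[OF vn1 T1] .
  have Tlin: "bounded_linear T" using bclin_linear[OF Tbc] .
  obtain K where K: "K > 0" "\<And>x. norm (A x) \<le> norm x * K"
    using bounded_linear.pos_bounded[OF bclin_linear[OF Abc]] by blast
  obtain KT where KT: "KT > 0" "\<And>x. norm (T x) \<le> norm x * KT"
    using bounded_linear.pos_bounded[OF Tlin] by blast
  define r where "r = 1 / K^2"
  have rpos: "r > 0" using K by (simp add: r_def)
  have rbd: "r * (norm (A x))^2 \<le> (norm x)^2" for x
  proof -
    have "(norm (A x))^2 \<le> (norm x * K)^2" using K(2)[of x] by (simp add: power_mono)
    then have "(norm (A x))^2 \<le> (norm x)^2 * K^2" by (simp add: power_mult_distrib)
    then show ?thesis using K by (simp add: r_def field_simps)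
  qed
  note ctx = Abc Bbc adj rpos rbd
  define D where "D = Dop A B r"
  have Deq: "D = (\<lambda>x. (\<lambda>x. x) x - r *\<^sub>R (A \<circ> B) x)" by (simp add: D_def Dop_def fun_eq_iff)
  have D1: "D \<in> R1" unfolding Deq by (intro vn_diff[OF vn1] vn_id[OF vn1] vn_scaleR[OF vn1] vn_comp[OF vn1] A1 B1)
  have D2: "D \<in> R2" unfolding Deq by (intro vn_diff[OF vn2] vn_id[OF vn2] vn_scaleR[OF vn2] vn_comp[OF vn2] A2 B2)
  define L where "L x = lim (\<lambda>n. (D ^^ (2 * n)) x)" for x
  have Lconv: "(\<lambda>n. (D ^^ (2 * n)) x) \<longlonglongrightarrow> L x" for x
    using Dn_conv[OF ctx, of x] unfolding D_def[symmetric] L_def by (simp add: convergent_LIMSEQ_iff)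
  define S where "S x = T x - T (L x)" for x
  define Sn where "Sn n x = T (x - (D ^^ (2 * n)) x)" for n x
  have Sn1: "Sn n \<in> R1" for n
  proof -
    have "Sn n = T \<circ> (\<lambda>x. (\<lambda>x. x) x - (D ^^ (2 * n)) x)" by (simp add: Sn_def fun_eq_iff)
    also have "\<dots> \<in> R1" by (intro vn_comp[OF vn1] T1 vn_diff[OF vn1] vn_id[OF vn1] vn_funpow[OF vn1] D1)
    finally show ?thesis .
  qed
  have Sn2: "Sn n \<in> R2" for n
  proof -
    define Q where "Q x = (\<Sum>j<2 * n. (D ^^ j) x)" for x
    have Q2: "Q \<in> R2" unfolding Q_def[abs_def]
      by (rule vn_sum[OF vn2, of "\<lambda>j. D ^^ j"]) (rule vn_funpow[OF vn2 D2])
    have "Sn n = (\<lambda>x. r *\<^sub>R (((T \<circ> A) \<circ> B) \<circ> Q) x)"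
    proof
      fix x
      have "Sn n x = T (r *\<^sub>R A (B (Q x)))"
        unfolding Sn_def Q_def D_def using Dn_ident[OF ctx] by simp
      also have "\<dots> = r *\<^sub>R T (A (B (Q x)))" by (simp add: linear_simps[OF Tlin])
      finally show "Sn n x = r *\<^sub>R (((T \<circ> A) \<circ> B) \<circ> Q) x" by simp
    qed
    also have "\<dots> \<in> R2" by (intro vn_scaleR[OF vn2] vn_comp[OF vn2] TA B2 Q2)
    finally show ?thesis .
  qed
  have Sconv: "(\<lambda>n. Sn n x) \<longlonglongrightarrow> S x" for x
  proof -
    have "(\<lambda>n. x - (D ^^ (2 * n)) x) \<longlonglongrightarrow> x - L x" by (intro tendsto_diff tendsto_const Lconv)
    then have "(\<lambda>n. T (x - (D ^^ (2 * n)) x)) \<longlonglongrightarrow> T (x - L x)" by (rule bounded_linear.tendsto[OF Tlin])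
    then show ?thesis unfolding Sn_def S_def by (simp add: linear_simps[OF Tlin])
  qed
  have Snbd: "norm (Sn n x) \<le> norm x * (2 * KT)" for n x
  proof -
    have "norm (Sn n x) \<le> norm (x - (D ^^ (2 * n)) x) * KT" unfolding Sn_def by (rule KT(2))
    also have "norm (x - (D ^^ (2 * n)) x) \<le> norm x + norm x"
      using norm_triangle_ineq4[of x "(D ^^ (2 * n)) x"] Dn_norm_le[OF ctx, of "2*n" x]
      unfolding D_def by linarith
    then have "norm (x - (D ^^ (2 * n)) x) * KT \<le> (norm x + norm x) * KT" using KT by (simp add: mult_right_mono)
    finally show ?thesis by simp
  qed
  have Sbc: "bounded_clinear S"
    by (rule bclin_limit[OF vn_bclin[OF vn1 Sn1] Snbd Sconv])
  have S1: "S \<in> R1" by (rule wot_limit[OF vn_wot[OF vn1] Sn1 Sconv Sbc])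
  have S2: "S \<in> R2" by (rule wot_limit[OF vn_wot[OF vn2] Sn2 Sconv Sbc])
  have "S \<circ> A = T \<circ> A"
  proof
    fix y
    have "((\<lambda>n. (D ^^ n) (A y)) \<circ> (\<lambda>n. 2 * n)) \<longlonglongrightarrow> 0"
      by (rule LIMSEQ_subseq_LIMSEQ[OF DnA_zero[OF ctx, of y, folded D_def]]) (simp add: strict_mono_def)
    then have "(\<lambda>n. (D ^^ (2 * n)) (A y)) \<longlonglongrightarrow> 0" by (simp add: comp_def)
    then have "L (A y) = 0" by (rule LIMSEQ_unique[OF Lconv[of "A y"]])
    then show "(S \<circ> A) y = (T \<circ> A) y" by (simp add: S_def linear_simps[OF Tlin])
  qed
  moreover have "S \<in> R1 \<inter> R2" using S1 S2 by simp
  ultimately show ?thesis by (rule bexI)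
qed

theorem proposition3p9:
  fixes R1 R2 :: "('a::chilbert_space \<Rightarrow> 'a) set" and A :: "'a \<Rightarrow> 'a"
  assumes "von_neumann_algebra R1" and "von_neumann_algebra R2"
    and "A \<in> R1 \<inter> R2"
  shows "op_rmult R1 A \<inter> R2 = op_rmult R1 A \<inter> op_rmult R2 A \<and>
         op_rmult R1 A \<inter> op_rmult R2 A = op_rmult (R1 \<inter> R2) A"
proof -
  have a: "op_rmult (R1 \<inter> R2) A \<subseteq> op_rmult R1 A \<inter> op_rmult R2 A"
    unfolding op_rmult_def by blast
  have b: "op_rmult R1 A \<inter> op_rmult R2 A \<subseteq> op_rmult R1 A \<inter> R2"
  proof
    fix X assume X: "X \<in> op_rmult R1 A \<inter> op_rmult R2 A"
    then obtain T where T: "T \<in> R2" "X = T \<circ> A" unfolding op_rmult_def by auto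
    have "A \<in> R2" using assms(3) by simp
    then have "X \<in> R2" using vn_comp[OF assms(2) T(1)] T(2) by simp
    then show "X \<in> op_rmult R1 A \<inter> R2" using X by simp
  qed
  have c: "op_rmult R1 A \<inter> R2 \<subseteq> op_rmult (R1 \<inter> R2) A"
  proof
    fix X assume X: "X \<in> op_rmult R1 A \<inter> R2"
    then obtain T where T: "T \<in> R1" "X = T \<circ> A" unfolding op_rmult_def by auto
    have A12: "A \<in> R1" "A \<in> R2" using assms(3) by auto
    have "T \<circ> A \<in> R2" using X T(2) by simp
    then obtain S where S: "S \<in> R1 \<inter> R2" "S \<circ> A = T \<circ> A"
      using key[OF assms(1,2) A12 T(1)] by blast
    have "S \<circ> A \<in> op_rmult (R1 \<inter> R2) A" unfolding op_rmult_def using S(1) by (rule imageI)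
    then show "X \<in> op_rmult (R1 \<inter> R2) A" using S(2) T(2) by simp
  qed
  have e1: "op_rmult R1 A \<inter> R2 = op_rmult R1 A \<inter> op_rmult R2 A" using a b c by (rule_tac equalityI; blast)
  have e2: "op_rmult R1 A \<inter> op_rmult R2 A = op_rmult (R1 \<inter> R2) A" using a b c by (rule_tac equalityI; blast)
  show ?thesis using e1 e2 by (rule conjI)
qed


end
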